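(* Let $N$ be a positive integer and let $1\le r<s\le N$ be integers. Then there exists $n_0$ such that $\widehat{T}_{r,N}(n)\ge \widehat{T}_{s,N}(n)$ for all integers $n\ge n_0$.
   Context: A partition $\lambda=(\lambda_0,\dots,\lambda_k)$ is a non-increasing finite sequence of positive integers, with size $|\lambda|=\sum_j\lambda_j$. For positive integers $r,N$, let $T_{r,N}(\lambda)$ be the number of indices $j$ with $\lambda_j\equiv r\pmod N$ (parts counted with multiplicity), and for a positive integer $n$ let $\widehat{T}_{r,N}(n)=\sum_{|\lambda|=n}T_{r,N}(\lambda)$, the sum over all partitions of $n$. *)

theory Defs
  imports Main
begin

definition is_partition :: "nat list \<Rightarrow> bool" where
  "is_partition xs \<longleftrightarrow> sorted_wrt (\<ge>) xs \<and> (\<forall>x\<in>set xs. 0 < x)"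

definition partitions_of :: "nat \<Rightarrow> nat list set" where
  "partitions_of n = {xs. is_partition xs \<and> sum_list xs = n}"

definition T :: "nat \<Rightarrow> nat \<Rightarrow> nat list \<Rightarrow> nat" where
  "T r N xs = length (filter (\<lambda>x. x mod N = r mod N) xs)"

definition T_hat :: "nat \<Rightarrow> nat \<Rightarrow> nat \<Rightarrow> nat" where
  "T_hat r N n = (\<Sum>xs\<in>partitions_of n. T r N xs)"

end

theory Submission
  imports Defs "HOL-Library.Multiset"
begin

lemma part_sorted: "is_partition xs \<Longrightarrow> sorted (rev xs)"
  unfolding is_partition_def by (simp add: sorted_wrt_rev)

lemma part_inj: "inj_on mset (partitions_of n)"
proof (rule inj_onI)
  fix xs ys assume a: "xs \<in> partitions_of n" "ys \<in> partitions_of n" "mset xs = mset ys"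
  have "sorted (rev xs)" "sorted (rev ys)" using a part_sorted unfolding partitions_of_def by auto
  moreover have "mset (rev xs) = mset (rev ys)" using a by simp
  ultimately have "rev xs = rev ys" by (metis properties_for_sort)
  then show "xs = ys" by simp
qed

lemma part_finite: "finite (partitions_of n)"
proof -
  have "partitions_of n \<subseteq> {xs. set xs \<subseteq> {0..n} \<and> length xs \<le> n}"
  proof
    fix xs assume "xs \<in> partitions_of n"
    then have p: "\<forall>x\<in>set xs. 0 < x" "sum_list xs = n"
      unfolding partitions_of_def is_partition_def by auto
    have "set xs \<subseteq> {0..n}" using p member_le_sum_list by fastforce
    moreover have "length xs \<le> sum_list xs" using p(1)
      by (induction xs) auto
    ultimately show "xs \<in> {xs. set xs \<subseteq> {0..n} \<and> length xs \<le> n}" using p by auto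
  qed
  then show ?thesis using finite_lists_length_le[of "{0..n}" n] finite_subset by blast
qed

lemma mset_Q: "(M \<in> mset ` partitions_of n) \<longleftrightarrow> ((\<forall>x\<in>#M. 0 < x) \<and> sum_mset M = n)"
proof
  assume "M \<in> mset ` partitions_of n"
  then obtain xs where "xs \<in> partitions_of n" "M = mset xs" by auto
  then show "(\<forall>x\<in>#M. 0 < x) \<and> sum_mset M = n"
    unfolding partitions_of_def is_partition_def by (auto simp: sum_mset_sum_list)
next
  assume h: "(\<forall>x\<in>#M. 0 < x) \<and> sum_mset M = n"
  define xs where "xs = rev (sorted_list_of_multiset M)"
  have "mset xs = M" unfolding xs_def by simp
  moreover have "xs \<in> partitions_of n"
    unfolding partitions_of_def is_partition_def xs_def using h
    by (auto simp: sorted_wrt_rev sum_mset_sum_list[symmetric])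
  ultimately show "M \<in> mset ` partitions_of n" by blast
qed

lemma key:
  assumes "1 \<le> k" "k \<le> k'"
  shows "(\<Sum>M\<in>mset ` partitions_of n. count M k') \<le> (\<Sum>M\<in>mset ` partitions_of n. count M k)"
proof -
  define Q where "Q = mset ` partitions_of n"
  have fQ: "finite Q" unfolding Q_def using part_finite by simp
  have c: "(\<Sum>M\<in>Q. count M x) = card (Sigma Q (\<lambda>M. {1..count M x}))" for x
    using fQ by (simp add: card_SigmaI)
  define h where "h = (\<lambda>(M::nat multiset, j::nat). (M - replicate_mset j k' + replicate_mset j k
       + replicate_mset (j*(k'-k)) 1, j))"
  have inj: "inj_on h (Sigma Q (\<lambda>M. {1..count M k'}))"
  proof (rule inj_onI)
    fix a b assume a: "a \<in> Sigma Q (\<lambda>M. {1..count M k'})" "b \<in> Sigma Q (\<lambda>M. {1..count M k'})"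
      "h a = h b"
    obtain M1 j1 where a1: "a = (M1, j1)" by fastforce
    obtain M2 j2 where b1: "b = (M2, j2)" by fastforce
    have j: "j1 = j2" using a(3) unfolding a1 b1 h_def by simp
    have "j1 \<le> count M1 k'" using a(1) a1 by auto
    then have s1: "replicate_mset j1 k' \<subseteq># M1" by (metis count_le_replicate_mset_subset_eq)
    have "j1 \<le> count M2 k'" using a(2) b1 j by auto
    then have s2: "replicate_mset j1 k' \<subseteq># M2" by (metis count_le_replicate_mset_subset_eq)
    have "M1 - replicate_mset j1 k' = M2 - replicate_mset j1 k'"
      using a(3) unfolding a1 b1 h_def j by (simp add: add.assoc)
    then have "M1 = M2" using s1 s2 by (metis subset_mset.diff_add)
    then show "a = b" using a1 b1 j by simp
  qed
  have img: "h ` Sigma Q (\<lambda>M. {1..count M k'}) \<subseteq> Sigma Q (\<lambda>M. {1..count M k})"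
  proof
    fix b assume "b \<in> h ` Sigma Q (\<lambda>M. {1..count M k'})"
    then obtain M j where Mj: "M \<in> Q" "1 \<le> j" "j \<le> count M k'" "b = h (M, j)" by auto
    define M' where "M' = M - replicate_mset j k' + replicate_mset j k + replicate_mset (j*(k'-k)) 1"
    have b: "b = (M', j)" using Mj(4) unfolding h_def M'_def by simp
    have s: "replicate_mset j k' \<subseteq># M" using Mj(3) by (metis count_le_replicate_mset_subset_eq)
    have MQ: "(\<forall>x\<in>#M. 0 < x) \<and> sum_mset M = n" using Mj(1) mset_Q unfolding Q_def by blast
    have "\<forall>x\<in>#M'. 0 < x" unfolding M'_def using MQ assms
      by (auto dest: in_diffD)
    moreover have "sum_mset M' = n"
    proof -
      have "sum_mset (M - replicate_mset j k') = n - j * k'"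
        using sum_mset_diff[OF s] MQ by simp
      moreover have "j * k' \<le> n"
      proof -
        obtain D where "M = replicate_mset j k' + D" using s by (metis mset_subset_eq_exists_conv)
        then have "sum_mset M = j * k' + sum_mset D" by simp
        then show ?thesis using MQ by simp
      qed
      moreover have "j * k \<le> j * k'" using assms by simp
      moreover have "sum_mset M' = sum_mset (M - replicate_mset j k') + j*k + j*(k'-k)"
        unfolding M'_def by simp
      moreover have "j*(k'-k) = j*k' - j*k" by (simp add: diff_mult_distrib2)
      ultimately show ?thesis by linarith
    qed
    ultimately have "M' \<in> Q" unfolding Q_def using mset_Q by blast
    moreover have "j \<le> count M' k" unfolding M'_def by simp
    ultimately show "b \<in> Sigma Q (\<lambda>M. {1..count M k})" using b Mj by auto
  qed
  have "card (Sigma Q (\<lambda>M. {1..count M k'})) \<le> card (Sigma Q (\<lambda>M. {1..count M k}))"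
    by (rule card_inj_on_le[OF inj img]) (use fQ in auto)
  then show ?thesis using c unfolding Q_def by simp
qed


lemma size_filter_sum:
  assumes "finite K" "K \<subseteq> {x. P x}" "\<forall>x\<in>#M. P x \<longrightarrow> x \<in> K"
  shows "size (filter_mset P M) = (\<Sum>k\<in>K. count M k)"
  using assms(3)
proof (induction M)
  case empty
  then show ?case by simp
next
  case (add a M)
  have "(\<Sum>k\<in>K. count (add_mset a M) k) = (\<Sum>k\<in>K. count M k + (if k = a then 1 else 0))"
    by (rule sum.cong) auto
  also have "\<dots> = (\<Sum>k\<in>K. count M k) + (if a \<in> K then 1 else 0)"
    using assms(1) by (simp add: sum.distrib)
  finally show ?case using add assms(2) by auto
qed

definition KK :: "nat \<Rightarrow> nat \<Rightarrow> nat \<Rightarrow> nat set" where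
  "KK r N n = {k. 1 \<le> k \<and> k \<le> n \<and> k mod N = r mod N}"

lemma T_sum:
  assumes "xs \<in> partitions_of n"
  shows "T r N xs = (\<Sum>k\<in>KK r N n. count (mset xs) k)"
proof -
  have p: "\<forall>x\<in>set xs. 0 < x" "sum_list xs = n"
    using assms unfolding partitions_of_def is_partition_def by auto
  have "T r N xs = size (filter_mset (\<lambda>x. x mod N = r mod N) (mset xs))"
    unfolding T_def by (metis mset_filter size_mset)
  also have "\<dots> = (\<Sum>k\<in>KK r N n. count (mset xs) k)"
  proof (rule size_filter_sum)
    show "finite (KK r N n)" unfolding KK_def by (rule finite_subset[of _ "{..n}"]) auto
    show "KK r N n \<subseteq> {x. x mod N = r mod N}" unfolding KK_def by auto
    show "\<forall>x\<in>#mset xs. x mod N = r mod N \<longrightarrow> x \<in> KK r N n"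
    proof (intro ballI impI)
      fix x assume "x \<in># mset xs" "x mod N = r mod N"
      then show "x \<in> KK r N n" using p member_le_sum_list[of x xs] unfolding KK_def
        by (simp add: Suc_leI)
    qed
  qed
  finally show ?thesis .
qed

lemma T_hat_F:
  "T_hat r N n = (\<Sum>k\<in>KK r N n. (\<Sum>M\<in>mset ` partitions_of n. count M k))"
proof -
  have "T_hat r N n = (\<Sum>xs\<in>partitions_of n. \<Sum>k\<in>KK r N n. count (mset xs) k)"
    unfolding T_hat_def by (rule sum.cong) (auto simp: T_sum)
  also have "\<dots> = (\<Sum>k\<in>KK r N n. \<Sum>xs\<in>partitions_of n. count (mset xs) k)"
    by (rule sum.swap)
  also have "\<dots> = (\<Sum>k\<in>KK r N n. (\<Sum>M\<in>mset ` partitions_of n. count M k))"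
    by (rule sum.cong) (auto simp: sum.reindex[OF part_inj])
  finally show ?thesis .
qed

theorem mainTheorem2:
  fixes N r s :: nat
  assumes "0 < N" and "1 \<le> r" and "r < s" and "s \<le> N"
  shows "\<exists>n0. \<forall>n\<ge>n0. T_hat r N n \<ge> T_hat s N n"
proof (intro exI allI impI)
  fix n :: nat
  define F where "F k = (\<Sum>M\<in>mset ` partitions_of n. count M k)" for k
  define d where "d = s - r"
  have fin: "finite (KK x N n)" for x unfolding KK_def by (rule finite_subset[of _ "{..n}"]) auto
  have ge: "k \<ge> s" and mo: "(k - d) mod N = r mod N" if "k \<in> KK s N n" for k
  proof -
    have k: "1 \<le> k" "k mod N = s mod N" using that unfolding KK_def by auto
    have dm: "k = N * (k div N) + k mod N" by simp
    show "k \<ge> s"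
    proof (cases "s = N")
      case True
      then have "k mod N = 0" using k by simp
      then have "k div N \<ge> 1" using dm k(1) by (metis add.right_neutral less_one mult_zero_right not_le)
      then show ?thesis using dm True \<open>k mod N = 0\<close>
        by (metis add.right_neutral mult.right_neutral mult_le_mono2)
    next
      case False
      then have "k mod N = s" using k assms by simp
      then show ?thesis by (metis mod_less_eq_dividend)
    qed
    show "(k - d) mod N = r mod N"
    proof (cases "s = N")
      case True
      then have km: "k mod N = 0" using k by simp
      then have q: "k div N \<ge> 1" using dm k(1) by (metis add.right_neutral less_one mult_zero_right not_le)
      obtain q' where q': "k div N = Suc q'" using q by (cases "k div N") auto
      have "k = N * q' + N" using dm km q' by simp
      then have "k - d = N * q' + r" using True assms unfolding d_def by linarith
      then show ?thesis by simp
    next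
      case False
      then have "k mod N = s" using k assms by simp
      then have "k - d = N * (k div N) + r" using dm assms unfolding d_def by linarith
      then show ?thesis by simp
    qed
  qed
  have "T_hat s N n = (\<Sum>k\<in>KK s N n. F k)" unfolding T_hat_F F_def ..
  also have "\<dots> \<le> (\<Sum>k\<in>KK s N n. F (k - d))"
  proof (rule sum_mono)
    fix k assume "k \<in> KK s N n"
    then have "k \<ge> s" by (rule ge)
    moreover have "1 \<le> k - d" "k - d \<le> k" using \<open>k \<ge> s\<close> assms unfolding d_def by auto
    ultimately show "F k \<le> F (k - d)" unfolding F_def using key by blast
  qed
  also have "\<dots> = (\<Sum>k\<in>(\<lambda>k. k - d) ` KK s N n. F k)"
  proof -
    have "inj_on (\<lambda>k. k - d) (KK s N n)"
    proof (rule inj_onI)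
      fix a b assume ab: "a \<in> KK s N n" "b \<in> KK s N n" "a - d = b - d"
      have "a \<ge> s" "b \<ge> s" using ge ab by auto
      then show "a = b" using ab(3) unfolding d_def by linarith
    qed
    then show ?thesis by (simp add: sum.reindex)
  qed
  also have "\<dots> \<le> (\<Sum>k\<in>KK r N n. F k)"
  proof (rule sum_mono2[OF fin])
    show "(\<lambda>k. k - d) ` KK s N n \<subseteq> KK r N n"
    proof
      fix x assume "x \<in> (\<lambda>k. k - d) ` KK s N n"
      then obtain k where k: "k \<in> KK s N n" "x = k - d" by auto
      have "k \<ge> s" using ge k(1) by blast
      then show "x \<in> KK r N n" using k mo assms unfolding KK_def d_def by auto
    qed
  qed auto
  also have "\<dots> = T_hat r N n" unfolding T_hat_F F_def ..
  finally show "T_hat s N n \<le> T_hat r N n" .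
qed

end
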